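(* Let $S_{(1,1)}(x)=\sum_{p\ge1}\binom{2p}{p}x^{2p}$ be the generating function of nonempty $(1,1)$-balanced words over two letters, and $C_{(1,1)}(x)$ the generating function of $(1,1)$-balanced necklaces (by length). Then $$C_{(1,1)}(x)=\sum_{n\ge1}\frac{\varphi(n)}{n}\sum_{p\ge1}\frac{1}{2p}\binom{2p}{p}x^{2np},\qquad x\,C_{(1,1)}'(x)=\sum_{n\ge1}\varphi(n)\,S_{(1,1)}(x^n).$$ Equivalently, the pointed class $\Theta Cyc_{(1,1)}$ is isomorphic (same number of objects of each size) to $\sum_{n>0}\varphi(n)\,Rep_n(Seq_{(1,1)})$. *)

theory Defs
  imports "HOL-Computational_Algebra.Formal_Power_Series" "HOL-Number_Theory.Totient"
begin

definition balanced11 :: "bool list \<Rightarrow> bool" where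
  "balanced11 w \<longleftrightarrow> count_list w True = count_list w False"

definition necklace :: "'a list \<Rightarrow> 'a list set" where
  "necklace w = {rotate k w | k. True}"

definition balanced_necklaces :: "nat \<Rightarrow> bool list set set" where
  "balanced_necklaces m = necklace ` {w. length w = m \<and> balanced11 w}"

definition C11 :: "real fps" where
  "C11 = Abs_fps (\<lambda>m. if m = 0 then 0 else real (card (balanced_necklaces m)))"

definition S11 :: "real fps" where
  "S11 = Abs_fps (\<lambda>m. if m \<noteq> 0 \<and> even m then real (m choose (m div 2)) else 0)"

definition L11 :: "real fps" where
  "L11 = Abs_fps (\<lambda>m. if m \<noteq> 0 \<and> even m then real (m choose (m div 2)) / real m else 0)"

end

theory Submission imports Defs begin
unbundle fps_syntax

lemma count_list_sum: "count_list xs x = (\<Sum>i<length xs. if xs!i = x then 1 else 0)"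
proof (induction xs)
  case (Cons a xs) then show ?case by (simp del: sum.lessThan_Suc add: sum.lessThan_Suc_shift)
qed simp

lemma count_bool: "count_list xs True + count_list xs False = length (xs::bool list)"
  by (induction xs) auto

lemma count_rotate1: "count_list (rotate1 xs) x = count_list xs x"
  by (cases xs) auto

lemma count_rotate: "count_list (rotate k xs) x = count_list xs x"
  by (induction k) (auto simp: count_rotate1)

lemma balanced_rotate: "balanced11 (rotate k w) = balanced11 w"
  unfolding balanced11_def by (simp add: count_rotate)

lemma sum_mod_rep:
  fixes f :: "nat \<Rightarrow> nat"
  assumes "g > 0"
  shows "(\<Sum>i<g*q. f (i mod g)) = q * (\<Sum>i<g. f i)"
proof (induction q)
  case (Suc q)
  have "(\<Sum>i<g*Suc q. f (i mod g)) = (\<Sum>i<g*q. f (i mod g)) + (\<Sum>i\<in>{g*q..<g*q+g}. f (i mod g))"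
    by (simp add: lessThan_atLeast0 add.commute sum.atLeastLessThan_concat)
  also have "(\<Sum>i\<in>{g*q..<g*q+g}. f (i mod g)) = (\<Sum>i\<in>{0..<g}. f ((i + g*q) mod g))"
    using sum.shift_bounds_nat_ivl[of "\<lambda>i. f (i mod g)" 0 "g*q" g] by (simp add: add.commute)
  also have "\<dots> = (\<Sum>i<g. f i)" using assms by (simp add: lessThan_atLeast0)
  finally show ?case using Suc by simp
qed simp

lemma fixed_iff:
  fixes w :: "'a list" and k m :: nat
  assumes m: "length w = m" "m > 0"
  defines "g \<equiv> gcd k m"
  shows "rotate k w = w \<longleftrightarrow> (\<forall>i<m. w!i = w!(i mod g))"
proof -
  have g0: "g > 0" using m by (simp add: g_def)
  have gm: "g dvd m" and gk: "g dvd k" by (simp_all add: g_def)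
  show ?thesis
  proof
    assume R: "rotate k w = w"
    have step: "\<forall>i<m. w!((k + i) mod m) = w!i"
    proof (intro allI impI)
      fix i assume i: "i < m"
      have "rotate k w ! i = w!((k+i) mod length w)" by (rule nth_rotate) (simp add: i m)
      then show "w!((k + i) mod m) = w!i" using R m by simp
    qed
    have iter: "\<forall>i<m. w!((j*k + i) mod m) = w!i" for j
    proof (induction j)
      case 0 then show ?case by simp
    next
      case (Suc j)
      show ?case
      proof (intro allI impI)
        fix i assume i: "i < m"
        have e1: "(k + (j*k + i) mod m) mod m = (k + (j*k + i)) mod m" by (rule mod_add_right_eq)
        have e2: "Suc j * k + i = k + (j*k + i)" by simp
        have lt: "(j*k + i) mod m < m" using m by simp
        have "w!((k + (j*k + i) mod m) mod m) = w!((j*k + i) mod m)"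
          using step lt by blast
        then have "w!((Suc j * k + i) mod m) = w!((j*k + i) mod m)"
          using e1 e2 by (simp add: add.assoc)
        then show "w!((Suc j * k + i) mod m) = w!i" using Suc i by simp
      qed
    qed
    have gstep: "\<forall>i<m. w!((g + i) mod m) = w!i"
    proof (cases "k = 0")
      case True then show ?thesis using g_def by simp
    next
      case False
      then obtain x y where xy: "k * x = m * y + g" using bezout_nat[of k m] g_def by blast
      have "(x*k + i) mod m = (g + i) mod m" for i
      proof -
        have e: "x*k + i = (g + i) + m*y" using xy by (simp add: mult.commute)
        have "((g + i) + m*y) mod m = (g + i) mod m" by (rule mod_mult_self2)
        then show ?thesis by (simp only: e)
      qed
      then show ?thesis using iter[of x] by simp
    qed
    have blk: "\<forall>r<g. r + g*j < m \<longrightarrow> w!(r + g*j) = w!r" for j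
    proof (induction j)
      case 0 then show ?case by simp
    next
      case (Suc j)
      show ?case
      proof (intro allI impI)
        fix r assume r: "r < g" "r + g * Suc j < m"
        then have "r + g*j < m" by simp
        then have e1: "w!((g + (r + g*j)) mod m) = w!(r + g*j)" using gstep by blast
        have e2: "(g + (r + g*j)) mod m = r + g * Suc j" using r by simp
        have e3: "w!(r + g*j) = w!r" using Suc.IH r \<open>r + g*j < m\<close> by blast
        show "w!(r + g * Suc j) = w!r" using e1 e2 e3 by simp
      qed
    qed
    show "\<forall>i<m. w!i = w!(i mod g)"
    proof (intro allI impI)
      fix i assume i: "i < m"
      have e: "i mod g + g * (i div g) = i" by (rule mod_mult_div_eq)
      have "i mod g < g" using g0 by simp
      moreover have "i mod g + g * (i div g) < m" using e i by simp
      ultimately have "w!(i mod g + g * (i div g)) = w!(i mod g)" using blk[of "i div g"] by blast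
      then show "w!i = w!(i mod g)" using e by simp
    qed
  next
    assume H: "\<forall>i<m. w!i = w!(i mod g)"
    show "rotate k w = w"
    proof (rule nth_equalityI)
      show "length (rotate k w) = length w" by simp
    next
      fix i assume "i < length (rotate k w)"
      then have i: "i < m" using m by simp
      have "rotate k w ! i = w!((k+i) mod m)" using nth_rotate[of i w k] i m by simp
      also have "\<dots> = w!(((k+i) mod m) mod g)" using H m by simp
      also have "((k+i) mod m) mod g = i mod g"
      proof -
        have "((k+i) mod m) mod g = (k+i) mod g" by (rule mod_mod_cancel[OF gm])
        moreover obtain c where "k = g*c" using gk by (rule dvdE)
        ultimately show ?thesis by simp
      qed
      finally show "rotate k w ! i = w ! i" using H i by simp
    qed
  qed
qed

definition ext :: "nat \<Rightarrow> nat \<Rightarrow> 'a list \<Rightarrow> 'a list" where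
  "ext m g u = map (\<lambda>i. u!(i mod g)) [0..<m]"

lemma count_ext:
  assumes "g > 0" "g dvd m" "g \<le> length u"
  shows "count_list (ext m g u) b = (m div g) * count_list (take g u) b"
proof -
  obtain q where q: "m = g*q" using assms by (auto elim: dvdE)
  have "count_list (ext m g u) b = (\<Sum>i<g*q. (\<lambda>j. if u!j = b then 1 else 0) (i mod g))"
    unfolding count_list_sum ext_def q by simp
  also have "\<dots> = q * (\<Sum>i<g. if u!i = b then 1 else 0)" by (rule sum_mod_rep[OF assms(1)])
  also have "(\<Sum>i<g. if u!i = b then 1 else 0) = count_list (take g u) b"
    unfolding count_list_sum using assms(3) by (intro sum.cong) auto
  finally show ?thesis using assms q by simp
qed

lemma count_ext':
  assumes "g > 0" "g dvd m" "length u = g"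
  shows "count_list (ext m g u) b = (m div g) * count_list u b"
  using count_ext[OF assms(1,2), of u] assms(3) by simp

lemma fix_card:
  fixes k m :: nat
  assumes "m > 0"
  shows "card {w::bool list. length w = m \<and> balanced11 w \<and> rotate k w = w}
       = card {u::bool list. length u = gcd k m \<and> balanced11 u}"
proof -
  define g where "g = gcd k m"
  have g0: "g > 0" using assms by (simp add: g_def)
  have gm: "g dvd m" by (simp add: g_def)
  have gle: "g \<le> m" using gm assms by (simp add: dvd_imp_le)
  have q0: "m div g > 0" using gle g0 by (simp add: div_greater_zero_iff)
  have bal_ext: "balanced11 (ext m g u) \<longleftrightarrow> balanced11 u" if "length u = g" for u :: "bool list"
    unfolding balanced11_def using count_ext'[OF g0 gm that] q0 by simp
  have ext_nth: "i < m \<Longrightarrow> ext m g u ! i = u!(i mod g)" for i and u :: "bool list"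
    by (simp add: ext_def)
  have fixw: "ext m g (take g w) = w" if w: "length w = m" "rotate k w = w" for w :: "bool list"
  proof -
      have F: "\<forall>i<m. w!i = w!(i mod g)" using fixed_iff[of w m k] assms g_def w by auto
      show "ext m g (take g w) = w"
      proof (rule nth_equalityI)
        show "length (ext m g (take g w)) = length w" using w by (simp add: ext_def)
      next
        fix i assume "i < length (ext m g (take g w))"
        then have i: "i < m" by (simp add: ext_def)
        have "i mod g < g" using g0 by simp
        then show "ext m g (take g w) ! i = w ! i" using ext_nth[OF i] F i by simp
      qed
  qed
  show ?thesis unfolding g_def[symmetric]
  proof (rule bij_betw_same_card[of "take g"], rule bij_betw_byWitness[where f' = "ext m g"])
    show "\<forall>w\<in>{w::bool list. length w = m \<and> balanced11 w \<and> rotate k w = w}. ext m g (take g w) = w"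
      using fixw by blast
  next
    show "\<forall>u\<in>{u::bool list. length u = g \<and> balanced11 u}. take g (ext m g u) = u"
    proof
      fix u :: "bool list" assume u: "u \<in> {u. length u = g \<and> balanced11 u}"
      show "take g (ext m g u) = u"
      proof (rule nth_equalityI)
        show "length (take g (ext m g u)) = length u" using u gle by (simp add: ext_def)
      next
        fix i assume "i < length (take g (ext m g u))"
        then have i: "i < g" using gle by (simp add: ext_def)
        then show "take g (ext m g u) ! i = u ! i" using ext_nth[of i u] gle by simp
      qed
    qed
  next
    show "take g ` {w::bool list. length w = m \<and> balanced11 w \<and> rotate k w = w} \<subseteq> {u. length u = g \<and> balanced11 u}"
    proof
      fix v assume "v \<in> take g ` {w::bool list. length w = m \<and> balanced11 w \<and> rotate k w = w}"
      then obtain w where w: "length w = m" "balanced11 w" "rotate k w = w" and v: "v = take g w" by auto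
      have "balanced11 (ext m g (take g w))" using w fixw by simp
      then have "balanced11 (take g w)" using bal_ext[of "take g w"] w gle by simp
      then show "v \<in> {u. length u = g \<and> balanced11 u}" using v w gle by simp
    qed
  next
    show "ext m g ` {u::bool list. length u = g \<and> balanced11 u} \<subseteq> {w. length w = m \<and> balanced11 w \<and> rotate k w = w}"
    proof
      fix v assume "v \<in> ext m g ` {u::bool list. length u = g \<and> balanced11 u}"
      then obtain u where u: "length u = g" "balanced11 u" and v: "v = ext m g u" by auto
      have L: "length v = m" using v by (simp add: ext_def)
      have "\<forall>i<m. v!i = v!(i mod g)"
      proof (intro allI impI)
        fix i assume i: "i < m"
        have "i mod g < m" using g0 gle by (meson less_le_trans mod_less_divisor)
        then show "v!i = v!(i mod g)" using v ext_nth[OF i] ext_nth[of "i mod g"] by simp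
      qed
      then have "rotate k v = v" using fixed_iff[of v m k] L assms g_def by simp
      then show "v \<in> {w. length w = m \<and> balanced11 w \<and> rotate k w = w}"
        using L bal_ext u v by simp
    qed
  qed
qed

definition Fb :: "nat \<Rightarrow> nat" where
  "Fb g = (if even g then g choose (g div 2) else 0)"

lemma count_true_card: "count_list u True = card {i. i < length u \<and> u!i}"
  by (simp add: count_list_eq_length_filter length_filter_conv_card)

lemma balanced_iff: "balanced11 u \<longleftrightarrow> 2 * card {i. i < length u \<and> u!i} = length u"
  using count_bool[of u] unfolding balanced11_def count_true_card by auto

lemma bal_card: "card {u::bool list. length u = g \<and> balanced11 u} = Fb g"
proof (cases "even g")
  case False
  have E: "{u::bool list. length u = g \<and> balanced11 u} = {}"
    using False by (auto simp: balanced_iff) (metis dvd_triv_left)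
  have "Fb g = 0" using False by (simp add: Fb_def)
  then show ?thesis by (metis E card.empty)
next
  case True
  have "card {u::bool list. length u = g \<and> balanced11 u} = card {S. S \<subseteq> {..<g} \<and> card S = g div 2}"
  proof (rule bij_betw_same_card[of "\<lambda>u. {i. i < length u \<and> u!i}"],
         rule bij_betw_byWitness[where f' = "\<lambda>S. map (\<lambda>i. i \<in> S) [0..<g]"])
    show "\<forall>u\<in>{u::bool list. length u = g \<and> balanced11 u}. map (\<lambda>i. i \<in> {i. i < length u \<and> u!i}) [0..<g] = u"
      by (auto intro!: nth_equalityI)
    show "\<forall>S\<in>{S. S \<subseteq> {..<g} \<and> card S = g div 2}. {i. i < length (map (\<lambda>i. i \<in> S) [0..<g]) \<and> map (\<lambda>i. i \<in> S) [0..<g] ! i} = S"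
      by auto
    show "(\<lambda>u. {i. i < length u \<and> u!i}) ` {u::bool list. length u = g \<and> balanced11 u} \<subseteq> {S. S \<subseteq> {..<g} \<and> card S = g div 2}"
      by (auto simp: balanced_iff)
    show "(\<lambda>S. map (\<lambda>i. i \<in> S) [0..<g]) ` {S. S \<subseteq> {..<g} \<and> card S = g div 2} \<subseteq> {u::bool list. length u = g \<and> balanced11 u}"
    proof
      fix u assume "u \<in> (\<lambda>S. map (\<lambda>i. i \<in> S) [0..<g]) ` {S. S \<subseteq> {..<g} \<and> card S = g div 2}"
      then obtain S where S: "S \<subseteq> {..<g}" "card S = g div 2" and u: "u = map (\<lambda>i. i \<in> S) [0..<g]" by auto
      have "{i. i < length u \<and> u!i} = S" using S u by auto
      then show "u \<in> {u::bool list. length u = g \<and> balanced11 u}" using S u True by (simp add: balanced_iff)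
    qed
  qed
  also have "\<dots> = g choose (g div 2)" using n_subsets[of "{..<g}" "g div 2"] by simp
  finally show ?thesis using True by (simp add: Fb_def)
qed

lemma card_filter_sum: "finite A \<Longrightarrow> card {x\<in>A. P x} = (\<Sum>x\<in>A. if P x then 1 else 0)"
  by (simp add: sum.If_cases Int_def)

lemma necklace_eq: "length w = m \<Longrightarrow> m > 0 \<Longrightarrow> necklace w = (\<lambda>k. rotate k w) ` {..<m}"
  unfolding necklace_def
  apply (auto simp: image_iff)
  by (metis lessThan_iff length_greater_0_conv mod_less_divisor rotate_conv_mod)

lemma in_necklace: "w \<in> necklace w"
  unfolding necklace_def by (metis (mono_tags) mem_Collect_eq rotate0 id_apply)

lemma necklace_same:
  assumes "v \<in> necklace w"
  shows "necklace v = necklace w"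
proof -
  obtain j where v: "v = rotate j w" using assms unfolding necklace_def by auto
  show ?thesis
  proof (cases "w = []")
    case True then show ?thesis using v by simp
  next
    case False
    define m where "m = length w"
    have m: "m > 0" using False m_def by simp
    have "necklace v \<subseteq> necklace w"
    proof
      fix x assume "x \<in> necklace v"
      then obtain k where "x = rotate k v" unfolding necklace_def by blast
      then have "x = rotate (k + j) w" by (simp add: v rotate_rotate)
      then show "x \<in> necklace w" unfolding necklace_def by blast
    qed
    moreover have "w = rotate (m - j mod m) v"
    proof -
      have "rotate (m - j mod m) v = rotate (m - j mod m + j) w" by (simp add: v rotate_rotate)
      also have "\<dots> = w"
      proof (rule rotate_id)
        have "(m - j mod m + j) mod m = (m - j mod m + j mod m) mod m" by (simp add: mod_add_right_eq)
        also have "\<dots> = 0" using m by simp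
        finally show "(m - j mod m + j) mod length w = 0" using m_def by simp
      qed
      finally show ?thesis by simp
    qed
    then have "necklace w \<subseteq> necklace v"
    proof -
      assume wv: "w = rotate (m - j mod m) v"
      show ?thesis
      proof
        fix x assume "x \<in> necklace w"
        then obtain k where "x = rotate k w" unfolding necklace_def by blast
        then have "x = rotate (k + (m - j mod m)) v" using wv by (simp add: rotate_rotate)
        then show "x \<in> necklace v" unfolding necklace_def by blast
      qed
    qed
    ultimately show ?thesis by blast
  qed
qed

lemma orbit_stab:
  assumes w: "length w = m" and m: "m > 0"
  shows "card (necklace w) * card {k\<in>{..<m}. rotate k w = w} = m"
proof -
  let ?S = "{k\<in>{..<m}. rotate k w = w}"
  have fib: "card {k\<in>{..<m}. rotate k w = v} = card ?S" if v: "v \<in> necklace w" for v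
  proof -
    obtain j where j: "j < m" "v = rotate j w" using v necklace_eq[OF w m] by auto
    have "card ?S = card {k\<in>{..<m}. rotate k w = v}"
    proof (rule bij_betw_same_card[of "\<lambda>s. (s + j) mod m"],
           rule bij_betw_byWitness[where f' = "\<lambda>k. (k + (m - j)) mod m"])
      show "\<forall>s\<in>?S. ((s + j) mod m + (m - j)) mod m = s"
      proof
        fix s assume "s \<in> ?S"
        then have s: "s < m" by simp
        have "((s + j) mod m + (m - j)) mod m = (s + j + (m - j)) mod m" by (simp add: mod_add_left_eq)
        also have "s + j + (m - j) = s + m" using j by simp
        finally show "((s + j) mod m + (m - j)) mod m = s" using s by simp
      qed
      show "\<forall>k\<in>{k\<in>{..<m}. rotate k w = v}. ((k + (m - j)) mod m + j) mod m = k"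
      proof
        fix k assume "k \<in> {k\<in>{..<m}. rotate k w = v}"
        then have k: "k < m" by simp
        have "((k + (m - j)) mod m + j) mod m = (k + (m - j) + j) mod m" by (simp add: mod_add_left_eq)
        also have "k + (m - j) + j = k + m" using j by simp
        finally show "((k + (m - j)) mod m + j) mod m = k" using k by simp
      qed
      show "(\<lambda>s. (s + j) mod m) ` ?S \<subseteq> {k\<in>{..<m}. rotate k w = v}"
      proof
        fix x assume "x \<in> (\<lambda>s. (s + j) mod m) ` ?S"
        then obtain s where s: "s < m" "rotate s w = w" and x: "x = (s + j) mod m" by auto
        have "rotate x w = rotate (s + j) w" using x w by (metis rotate_conv_mod)
        also have "\<dots> = rotate j (rotate s w)" by (simp add: rotate_rotate add.commute)
        finally have "rotate x w = v" using s j by simp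
        then show "x \<in> {k\<in>{..<m}. rotate k w = v}" using x m by simp
      qed
      show "(\<lambda>k. (k + (m - j)) mod m) ` {k\<in>{..<m}. rotate k w = v} \<subseteq> ?S"
      proof
        fix x assume "x \<in> (\<lambda>k. (k + (m - j)) mod m) ` {k\<in>{..<m}. rotate k w = v}"
        then obtain k where k: "k < m" "rotate k w = v" and x: "x = (k + (m - j)) mod m" by auto
        have "rotate x w = rotate (k + (m - j)) w" using x w by (metis rotate_conv_mod)
        also have "\<dots> = rotate (m - j) (rotate k w)" by (simp add: rotate_rotate add.commute)
        also have "\<dots> = rotate (m - j + j) w" using k j by (simp add: rotate_rotate)
        also have "\<dots> = w" using j w by simp
        finally show "x \<in> ?S" using x m by simp
      qed
    qed
    then show ?thesis by simp
  qed
  have "m = (\<Sum>k\<in>{..<m}. (1::nat))" by simp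
  also have "\<dots> = (\<Sum>v\<in>(\<lambda>k. rotate k w) ` {..<m}. \<Sum>k\<in>{k\<in>{..<m}. rotate k w = v}. 1)"
    by (rule sum.image_gen) simp
  also have "\<dots> = (\<Sum>v\<in>necklace w. card ?S)"
    using fib necklace_eq[OF w m] by simp
  also have "\<dots> = card (necklace w) * card ?S" by simp
  finally show ?thesis by simp
qed

lemma burnside:
  assumes m: "m > 0"
  shows "m * card (balanced_necklaces m)
       = (\<Sum>k<m. card {w::bool list. length w = m \<and> balanced11 w \<and> rotate k w = w})"
proof -
  define B where "B = {w::bool list. length w = m \<and> balanced11 w}"
  define N where "N = necklace ` B"
  define st where "st w = card {k\<in>{..<m}. rotate k w = w}" for w :: "bool list"
  have finB: "finite B"
  proof -
    have "B \<subseteq> {xs. set xs \<subseteq> (UNIV::bool set) \<and> length xs = m}" by (auto simp: B_def)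
    then show ?thesis using finite_lists_length_eq[of "UNIV::bool set" m] finite_subset by auto
  qed
  have CsubB: "C \<subseteq> B" if "C \<in> N" for C
    using that unfolding N_def B_def necklace_def by (auto simp: balanced_rotate)
  have UN: "\<Union>N = B"
    using CsubB in_necklace unfolding N_def by blast
  have finN: "finite N" unfolding N_def using finB by simp
  have finC: "\<forall>C\<in>N. finite C" using CsubB finB finite_subset by blast
  have disj: "\<forall>C1\<in>N. \<forall>C2\<in>N. C1 \<noteq> C2 \<longrightarrow> C1 \<inter> C2 = {}"
    unfolding N_def using necklace_same by blast
  have inner: "(\<Sum>w\<in>C. st w) = m" if C: "C \<in> N" for C
  proof -
    obtain w0 where w0: "w0 \<in> B" "C = necklace w0" using C unfolding N_def by auto
    have eq: "card C * st w = m" if "w \<in> C" for w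
    proof -
      have "necklace w = C" using that w0 necklace_same by blast
      moreover have "length w = m" using that CsubB C B_def by auto
      ultimately show ?thesis using orbit_stab[of w m] m st_def by simp
    qed
    have "C \<noteq> {}" using w0 in_necklace by blast
    then obtain w1 where w1: "w1 \<in> C" by blast
    have "(\<Sum>w\<in>C. st w) = (\<Sum>w\<in>C. st w1)"
    proof (rule sum.cong)
      fix w assume "w \<in> C"
      then have "card C * st w = card C * st w1" using eq w1 by simp
      moreover have "card C > 0" using w1 finC C card_gt_0_iff by blast
      ultimately show "st w = st w1" by simp
    qed simp
    also have "\<dots> = card C * st w1" by simp
    finally show ?thesis using eq[OF w1] by simp
  qed
  have "(\<Sum>w\<in>B. st w) = (\<Sum>C\<in>N. \<Sum>w\<in>C. st w)"
    using sum.Union_disjoint[OF finC disj, of st] UN by simp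
  also have "\<dots> = card N * m" using inner by simp
  finally have A: "(\<Sum>w\<in>B. st w) = m * card N" by simp
  have "(\<Sum>w\<in>B. st w) = (\<Sum>w\<in>B. \<Sum>k<m. if rotate k w = w then 1 else 0)"
    unfolding st_def by (intro sum.cong refl card_filter_sum) simp
  also have "\<dots> = (\<Sum>k<m. \<Sum>w\<in>B. if rotate k w = w then 1 else 0)" by (rule sum.swap)
  also have "\<dots> = (\<Sum>k<m. card {w\<in>B. rotate k w = w})" using finB by (simp add: card_filter_sum)
  finally show ?thesis using A unfolding balanced_necklaces_def N_def B_def
    by (simp add: conj_assoc)
qed

lemma gcd_group:
  fixes f :: "nat \<Rightarrow> nat"
  assumes m: "m > 0"
  shows "(\<Sum>k<m. f (gcd k m)) = (\<Sum>d | d dvd m. totient d * f (m div d))"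
proof -
  have "(\<Sum>k<m. f (gcd k m)) = (\<Sum>k\<in>{0<..m}. f (gcd k m))"
  proof -
    have a: "{..<m} = insert 0 {0<..<m}" using m by auto
    have b: "{0<..m} = insert m {0<..<m}" using m by auto
    show ?thesis unfolding a b by simp
  qed
  also have "\<dots> = (\<Sum>d\<in>(\<lambda>k. gcd k m) ` {0<..m}. \<Sum>k\<in>{k\<in>{0<..m}. gcd k m = d}. f (gcd k m))"
    by (rule sum.image_gen) simp
  also have "(\<lambda>k. gcd k m) ` {0<..m} = {d. d dvd m}"
  proof
    show "{d. d dvd m} \<subseteq> (\<lambda>k. gcd k m) ` {0<..m}"
    proof
      fix d assume "d \<in> {d. d dvd m}"
      then have d: "d dvd m" by simp
      then have "d \<in> {0<..m}" using m by (auto intro: dvd_imp_le Nat.gr0I)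
      moreover have "gcd d m = d" using d by (simp add: gcd_nat.absorb1)
      ultimately show "d \<in> (\<lambda>k. gcd k m) ` {0<..m}" by force
    qed
  qed auto
  also have "(\<Sum>d\<in>{d. d dvd m}. \<Sum>k\<in>{k\<in>{0<..m}. gcd k m = d}. f (gcd k m))
           = (\<Sum>d\<in>{d. d dvd m}. totient (m div d) * f d)"
  proof (rule sum.cong[OF refl])
    fix d assume "d \<in> {d. d dvd m}"
    then have d: "d dvd m" by simp
    have "(\<Sum>k\<in>{k\<in>{0<..m}. gcd k m = d}. f (gcd k m)) = (\<Sum>k\<in>{k\<in>{0<..m}. gcd k m = d}. f d)"
      by (rule sum.cong) auto
    also have "\<dots> = card {k\<in>{0<..m}. gcd k m = d} * f d" by simp
    also have "\<dots> = totient (m div d) * f d" using card_gcd_eq_totient[OF m d] by simp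
    finally show "(\<Sum>k\<in>{k\<in>{0<..m}. gcd k m = d}. f (gcd k m)) = totient (m div d) * f d" .
  qed
  also have "\<dots> = (\<Sum>d | d dvd m. totient d * f (m div d))"
  proof -
    have H: "m div (m div d) = d \<and> m div d dvd m" if dm: "d dvd m" for d
    proof -
      obtain q where q: "m = d * q" using dm by (rule dvdE)
      then have d0: "d > 0" "q > 0" using m by auto
      have mq: "m div d = q" using q d0 by simp
      have md: "m div q = d" using q d0 by simp
      show ?thesis using mq md q by simp
    qed
    show ?thesis
      by (rule sum.reindex_bij_witness[of _ "\<lambda>d. m div d" "\<lambda>d. m div d"]) (auto dest: H)
  qed
  finally show ?thesis .
qed

lemma core:
  assumes m: "m > 0"
  shows "m * card (balanced_necklaces m) = (\<Sum>d | d dvd m. totient d * Fb (m div d))"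
  using burnside[OF m] fix_card[OF m] bal_card gcd_group[OF m, of Fb] by simp

lemma compose_X_pow_nth:
  fixes a :: "real fps"
  assumes n: "n > 0"
  shows "(a oo fps_X ^ n) $ m = (if n dvd m then a $ (m div n) else 0)"
proof -
  have "(a oo fps_X ^ n) $ m = (\<Sum>i\<in>{0..m}. a $ i * ((fps_X ^ n) ^ i $ m))" by (rule fps_compose_nth)
  also have "\<dots> = (\<Sum>i\<in>{0..m}. if i = m div n \<and> n dvd m then a $ i else 0)"
  proof (rule sum.cong[OF refl])
    fix i assume "i \<in> {0..m}"
    have "(m = n * i) \<longleftrightarrow> (i = m div n \<and> n dvd m)" using n by auto
    then show "a $ i * ((fps_X ^ n) ^ i $ m) = (if i = m div n \<and> n dvd m then a $ i else 0)"
      by (simp add: power_mult[symmetric] mult.commute)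
  qed
  also have "\<dots> = (if n dvd m then a $ (m div n) else 0)"
  proof (cases "n dvd m")
    case True
    have "m div n \<in> {0..m}" by simp
    then show ?thesis using True by (simp add: sum.delta')
  qed simp
  finally show ?thesis .
qed

lemma sums_fps_stable:
  fixes f :: "nat \<Rightarrow> real fps"
  assumes z: "\<And>k n. n \<le> k \<Longrightarrow> f k $ n = 0"
      and e: "\<And>n. (\<Sum>k<n. f k $ n) = G $ n"
  shows "f sums G"
  unfolding sums_def
proof (rule tendsto_fpsI)
  fix n
  show "\<forall>\<^sub>F N in sequentially. (\<Sum>k<N. f k) $ n = G $ n"
    unfolding eventually_sequentially
  proof (intro exI allI impI)
    fix N assume N: "n \<le> N"
    have "(\<Sum>k<N. f k) $ n = (\<Sum>k<N. f k $ n)" by (simp add: fps_sum_nth)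
    also have "\<dots> = (\<Sum>k<n. f k $ n)"
      by (rule sum.mono_neutral_right) (use N z in auto)
    finally show "(\<Sum>k<N. f k) $ n = G $ n" using e by simp
  qed
qed

lemma sum_divisors_shift:
  fixes h :: "nat \<Rightarrow> real"
  assumes n: "n > 0"
  shows "(\<Sum>k<n. if Suc k dvd n then h (Suc k) else 0) = (\<Sum>d | d dvd n. h d)"
proof -
  have "(\<Sum>k<n. if Suc k dvd n then h (Suc k) else 0) = (\<Sum>d\<in>Suc ` {..<n}. if d dvd n then h d else 0)"
    by (simp add: sum.reindex)
  also have "\<dots> = (\<Sum>d\<in>{1..n}. if d dvd n then h d else 0)" by (simp add: image_Suc_lessThan)
  also have "\<dots> = (\<Sum>d\<in>{d\<in>{1..n}. d dvd n}. h d)" by (rule sum.inter_filter[symmetric]) simp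
  also have "{d\<in>{1..n}. d dvd n} = {d. d dvd n}" using n
    by (auto intro: dvd_imp_le Nat.gr0I)
  finally show ?thesis .
qed

lemma C11_nth: "n > 0 \<Longrightarrow> C11 $ n = real (card (balanced_necklaces n))"
  by (simp add: C11_def)

lemma core_real:
  assumes n: "n > 0"
  shows "real n * C11 $ n = (\<Sum>d | d dvd n. real (totient d) * real (Fb (n div d)))"
  using core[OF n] n by (simp add: C11_nth flip: of_nat_mult of_nat_sum)

lemma L11_nth: "q > 0 \<Longrightarrow> L11 $ q = real (Fb q) / real q"
  by (simp add: L11_def Fb_def)

lemma S11_nth: "q > 0 \<Longrightarrow> S11 $ q = real (Fb q)"
  by (simp add: S11_def Fb_def)

lemma part1:
  "(\<lambda>k. fps_const (real (totient (Suc k)) / real (Suc k)) * (L11 oo fps_X ^ Suc k)) sums C11"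
proof (rule sums_fps_stable)
  fix k n :: nat assume kn: "n \<le> k"
  show "(fps_const (real (totient (Suc k)) / real (Suc k)) * (L11 oo fps_X ^ Suc k)) $ n = 0"
  proof (cases "n = 0")
    case True then show ?thesis by (simp add: L11_def)
  next
    case False
    then have "\<not> Suc k dvd n" using kn by (auto dest: dvd_imp_le)
    then show ?thesis by (simp add: compose_X_pow_nth del: power_Suc)
  qed
next
  fix n :: nat
  show "(\<Sum>k<n. (fps_const (real (totient (Suc k)) / real (Suc k)) * (L11 oo fps_X ^ Suc k)) $ n) = C11 $ n"
  proof (cases "n = 0")
    case True then show ?thesis by (simp add: C11_def)
  next
    case False
    then have n: "n > 0" by simp
    have "(\<Sum>k<n. (fps_const (real (totient (Suc k)) / real (Suc k)) * (L11 oo fps_X ^ Suc k)) $ n)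
        = (\<Sum>k<n. if Suc k dvd n then real (totient (Suc k)) / real (Suc k) * L11 $ (n div Suc k) else 0)"
      by (intro sum.cong refl) (simp add: compose_X_pow_nth del: of_nat_Suc power_Suc)
    also have "\<dots> = (\<Sum>d | d dvd n. real (totient d) / real d * L11 $ (n div d))"
      by (rule sum_divisors_shift[OF n])
    also have "\<dots> = (\<Sum>d | d dvd n. real (totient d) * real (Fb (n div d)) / real n)"
    proof (rule sum.cong[OF refl])
      fix d assume "d \<in> {d. d dvd n}"
      then obtain q where q: "n = d * q" by (auto elim: dvdE)
      then have d0: "d > 0" "q > 0" using n by auto
      have nq: "n div d = q" using q d0 by simp
      show "real (totient d) / real d * L11 $ (n div d) = real (totient d) * real (Fb (n div d)) / real n"
        using d0 by (simp add: nq L11_nth q)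
    qed
    also have "\<dots> = (\<Sum>d | d dvd n. real (totient d) * real (Fb (n div d))) / real n"
      by (simp add: sum_divide_distrib)
    also have "\<dots> = C11 $ n" using core_real[OF n] n by (simp add: field_simps)
    finally show ?thesis .
  qed
qed

lemma part2:
  "(\<lambda>k. fps_const (real (totient (Suc k))) * (S11 oo fps_X ^ Suc k)) sums (fps_X * fps_deriv C11)"
proof (rule sums_fps_stable)
  fix k n :: nat assume kn: "n \<le> k"
  show "(fps_const (real (totient (Suc k))) * (S11 oo fps_X ^ Suc k)) $ n = 0"
  proof (cases "n = 0")
    case True then show ?thesis by (simp add: S11_def)
  next
    case False
    then have "\<not> Suc k dvd n" using kn by (auto dest: dvd_imp_le)
    then show ?thesis by (simp add: compose_X_pow_nth del: power_Suc)
  qed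
next
  fix n :: nat
  show "(\<Sum>k<n. (fps_const (real (totient (Suc k))) * (S11 oo fps_X ^ Suc k)) $ n) = (fps_X * fps_deriv C11) $ n"
  proof (cases "n = 0")
    case True then show ?thesis by simp
  next
    case False
    then have n: "n > 0" by simp
    have G: "(fps_X * fps_deriv C11) $ n = real n * C11 $ n"
      using n by (cases n) (simp_all add: algebra_simps)
    have "(\<Sum>k<n. (fps_const (real (totient (Suc k))) * (S11 oo fps_X ^ Suc k)) $ n)
        = (\<Sum>k<n. if Suc k dvd n then real (totient (Suc k)) * S11 $ (n div Suc k) else 0)"
      by (intro sum.cong refl) (simp add: compose_X_pow_nth del: of_nat_Suc power_Suc)
    also have "\<dots> = (\<Sum>d | d dvd n. real (totient d) * S11 $ (n div d))"
      by (rule sum_divisors_shift[OF n])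
    also have "\<dots> = (\<Sum>d | d dvd n. real (totient d) * real (Fb (n div d)))"
    proof (rule sum.cong[OF refl])
      fix d assume "d \<in> {d. d dvd n}"
      then obtain q where q: "n = d * q" by (auto elim: dvdE)
      then have d0: "d > 0" "q > 0" using n by auto
      have nq: "n div d = q" using q d0 by simp
      show "real (totient d) * S11 $ (n div d) = real (totient d) * real (Fb (n div d))"
        using d0 by (simp add: nq S11_nth)
    qed
    also have "\<dots> = (fps_X * fps_deriv C11) $ n" using core_real[OF n] G by simp
    finally show ?thesis .
  qed
qed

theorem mainTheorem4:
  shows "(\<lambda>k. fps_const (real (totient (Suc k)) / real (Suc k)) * (L11 oo fps_X ^ Suc k))
           sums C11
       \<and> (\<lambda>k. fps_const (real (totient (Suc k))) * (S11 oo fps_X ^ Suc k))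
           sums (fps_X * fps_deriv C11)"
  using part1 part2 by blast

end
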